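(* Let $G$ be a graph, let $h\geq 1$ and $n$ be positive integers, let $\varepsilon\in(0,\frac19]$ and $\rho\in(0,\frac12]$. Suppose $V_1,\dots,V_h\subseteq V(G)$ is a $(\rho,\varepsilon,\geq n)$-rich inflation of $K_h$, and let $Y=\bigcup_{i=1}^hV_i$. Let $X\subseteq V(G)$ be disjoint from $Y$ with $|X|\geq n$ and $d_X(y)\geq p|X|$ for all $y\in Y$, where $p\geq(1-\varepsilon)\rho$. Then at least one of the following holds: (a) $(V_1,\dots,V_h,X)$ is a $(\rho,2\varepsilon,\geq n)$-rich inflation of $K_{h+1}$; or (b) there exist $X'\subseteq X$ and $Y'\subseteq Y$ with $|X'|\geq\varepsilon\rho^{h^2}|X|$ and $|Y'|\geq \varepsilon\rho^{h^2}n$ such that $d_{X'}(y)\geq(1+\varepsilon\rho^{2h})p|X'|$ for all $y\in Y'$.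
   Context: For a vertex $y$ and a vertex set $A$, $d_A(y)=|N(y)\cap A|$. For pairwise disjoint $V_1,\dots,V_h\subseteq V(G)$, a canonical copy of $K_h$ is a tuple $(v_1,\dots,v_h)$ with $v_i\in V_i$ and all pairs $v_iv_j$ ($i\neq j$) edges of $G$. The tuple $(V_1,\dots,V_h)$ of pairwise disjoint sets is a $(\rho,\varepsilon,\geq n)$-rich inflation of $K_h$ if $e(G[V_1])\geq\rho\binom{|V_1|}2$, the number of canonical copies of $K_h$ is at least $((1-\varepsilon)\rho)^{\binom h2}\prod_{i=1}^h|V_i|$, and $|V_i|\geq n$ for all $i$. *)

theory Defs
  imports Complex_Main "HOL-Library.FuncSet"
begin

definition graph :: "'a set \<Rightarrow> ('a \<Rightarrow> 'a \<Rightarrow> bool) \<Rightarrow> bool" where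
  "graph V E \<longleftrightarrow> finite V \<and> (\<forall>u v. E u v \<longrightarrow> E v u) \<and> (\<forall>v. \<not> E v v)
      \<and> (\<forall>u v. E u v \<longrightarrow> u \<in> V \<and> v \<in> V)"

definition deg_in :: "('a \<Rightarrow> 'a \<Rightarrow> bool) \<Rightarrow> 'a set \<Rightarrow> 'a \<Rightarrow> nat" where
  "deg_in E A y = card {x \<in> A. E y x}"

definition edges_in :: "('a \<Rightarrow> 'a \<Rightarrow> bool) \<Rightarrow> 'a set \<Rightarrow> nat" where
  "edges_in E A = card {{u, v} | u v. u \<in> A \<and> v \<in> A \<and> E u v}"

text \<open>Canonical copies of K_h for the sets Vs 0, ..., Vs (h-1) (the paper's V_1..V_h)\<close>
definition canonical_copies :: "('a \<Rightarrow> 'a \<Rightarrow> bool) \<Rightarrow> nat \<Rightarrow> (nat \<Rightarrow> 'a set) \<Rightarrow> (nat \<Rightarrow> 'a) set" where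
  "canonical_copies E h Vs =
     {f \<in> Pi\<^sub>E {..<h} Vs. \<forall>i<h. \<forall>j<h. i \<noteq> j \<longrightarrow> E (f i) (f j)}"

definition rich_inflation ::
  "'a set \<Rightarrow> ('a \<Rightarrow> 'a \<Rightarrow> bool) \<Rightarrow> nat \<Rightarrow> (nat \<Rightarrow> 'a set) \<Rightarrow> real \<Rightarrow> real \<Rightarrow> nat \<Rightarrow> bool" where
  "rich_inflation V E h Vs \<rho> \<epsilon> n \<longleftrightarrow>
     (\<forall>i<h. Vs i \<subseteq> V) \<and>
     (\<forall>i<h. \<forall>j<h. i \<noteq> j \<longrightarrow> Vs i \<inter> Vs j = {}) \<and>
     real (edges_in E (Vs 0)) \<ge> \<rho> * real (card (Vs 0) choose 2) \<and>
     real (card (canonical_copies E h Vs))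
        \<ge> ((1 - \<epsilon>) * \<rho>) ^ (h choose 2) * (\<Prod>i<h. real (card (Vs i))) \<and>
     (\<forall>i<h. card (Vs i) \<ge> n)"

end

theory Submission
  imports Defs
begin


lemma ineq1:
  fixes \<epsilon> \<rho> :: real
  assumes e: "0 < \<epsilon>" "\<epsilon> \<le> 1/9" and r: "0 < \<rho>" "\<rho> \<le> 1/2" and h: "h \<ge> 2"
  shows "((1-2*\<epsilon>)*\<rho>)^(h choose 2) \<le> ((1-\<epsilon>)*\<rho>)^(h choose 2) - real (h-1) * (\<epsilon>*\<rho>^(h^2))"
proof -
  define C where "C = h choose 2"
  obtain k where k: "h = k + 2" using h by (metis add.commute le_add_diff_inverse)
  have C2: "2 * C = h * (h - 1)" unfolding C_def choose_two k by simp
  have "C \<ge> 1" using C2 k by simp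
  then obtain m where m: "C = Suc m" by (cases C) auto
  have hsq: "h^2 = (2*m+1) + (h+1)"
    using C2 m k by (simp add: power2_eq_square algebra_simps)
  define a where "a = (1-\<epsilon>)*\<rho>"
  define b where "b = (1-2*\<epsilon>)*\<rho>"
  have b0: "0 \<le> b" "b \<le> a" using e r by (auto simp: a_def b_def)
  have "b^m \<le> a^m" using b0 by (simp add: power_mono)
  hence "b^C \<le> b * a^m" using b0 m by (simp add: mult_left_mono)
  hence 1: "a^C - b^C \<ge> a^m * (a - b)" using m by (simp add: algebra_simps)
  have ab: "a - b = \<epsilon> * \<rho>" by (simp add: a_def b_def algebra_simps)
  have "\<rho>*\<rho> \<le> a" using e r unfolding a_def by (intro mult_right_mono) auto
  hence "(\<rho>*\<rho>)^m \<le> a^m" using r by (intro power_mono) auto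
  hence 2: "\<rho>^(2*m) \<le> a^m" by (simp add: power_mult power2_eq_square)
  have "h - 1 < 2^(h+1)"
    by (metis less_exp diff_le_self le_less_trans less_imp_le_nat power_increasing_iff less_add_one One_nat_def le_add1 less_le_trans one_less_numeral_iff semiring_norm(76) power_strict_increasing)
  hence 4: "real (h-1) \<le> 2^(h+1)"
    by (metis of_nat_less_iff of_nat_numeral of_nat_power less_imp_le)
  have 5: "\<rho>^(h+1) \<le> (1/2)^(h+1)" using r by (intro power_mono) auto
  have "real (h-1) * \<rho>^(h+1) \<le> 2^(h+1) * (1/2)^(h+1)"
    using 4 5 r by (intro mult_mono) auto
  also have "\<dots> = 1" by (simp add: power_one_over)
  finally have 3: "real (h-1) * \<rho>^(h+1) \<le> 1" .
  have "real (h-1) * (\<epsilon>*\<rho>^(h^2)) = \<epsilon> * \<rho>^(2*m+1) * (real (h-1) * \<rho>^(h+1))"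
    by (simp add: hsq power_add)
  also have "\<dots> \<le> \<epsilon> * \<rho>^(2*m+1)" using 3 e r by (simp add: mult_left_le)
  also have "\<dots> = \<rho>^(2*m) * (\<epsilon>*\<rho>)" by simp
  also have "\<dots> \<le> a^m * (a - b)" using 2 e r ab by (simp add: mult_right_mono)
  finally show ?thesis using 1 by (simp add: C_def[symmetric] a_def[symmetric] b_def[symmetric])
qed



lemma fiber_bound:
  fixes Vs :: "nat \<Rightarrow> 'a set" and F :: "(nat \<Rightarrow> 'a) \<Rightarrow> 'a set" and c :: real
  assumes fin: "\<And>i. i < h \<Longrightarrow> finite (Vs i)" and j: "j < h"
    and B: "B \<subseteq> Pi\<^sub>E {..<h} Vs"
    and BF: "\<And>K. K \<in> B \<Longrightarrow> K j \<in> F (K(j:=undefined))"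
    and Fsub: "\<And>t. F t \<subseteq> Vs j"
    and Fc: "\<And>t. real (card (F t)) \<le> c"
  shows "real (card B) \<le> c * (\<Prod>i\<in>{..<h}-{j}. real (card (Vs i)))"
proof -
  define T where "T = Pi\<^sub>E ({..<h}-{j}) Vs"
  have finT: "finite T" unfolding T_def using fin by (intro finite_PiE) auto
  have finF: "finite (F t)" for t using Fsub fin j by (meson finite_subset)
  have sub: "B \<subseteq> (\<Union>t\<in>T. (\<lambda>v. t(j:=v)) ` F t)"
  proof
    fix K assume K: "K \<in> B"
    have KP: "K \<in> Pi\<^sub>E {..<h} Vs" using K B by blast
    have "K(j:=undefined) \<in> T" unfolding T_def using KP
      by (auto simp: PiE_iff extensional_def)
    moreover have "K = (K(j:=undefined))(j := K j)" by simp
    ultimately show "K \<in> (\<Union>t\<in>T. (\<lambda>v. t(j:=v)) ` F t)" using BF[OF K] by blast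
  qed
  have finU: "finite (\<Union>t\<in>T. (\<lambda>v. t(j:=v)) ` F t)" using finT finF by blast
  have "card B \<le> card (\<Union>t\<in>T. (\<lambda>v. t(j:=v)) ` F t)" using card_mono[OF finU sub] .
  also have "\<dots> \<le> (\<Sum>t\<in>T. card ((\<lambda>v. t(j:=v)) ` F t))" using card_UN_le[OF finT] .
  also have "\<dots> = (\<Sum>t\<in>T. card (F t))"
  proof (rule sum.cong)
    fix t show "card ((\<lambda>v. t(j:=v)) ` F t) = card (F t)"
      by (rule card_image) (auto simp: inj_on_def fun_eq_iff split: if_splits; metis)
  qed simp
  finally have "real (card B) \<le> (\<Sum>t\<in>T. real (card (F t)))"
    by (metis of_nat_le_iff of_nat_sum)
  also have "\<dots> \<le> (\<Sum>t\<in>T. c)" using Fc by (intro sum_mono) auto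
  also have "\<dots> = c * real (card T)" by simp
  also have "card T = (\<Prod>i\<in>{..<h}-{j}. card (Vs i))" unfolding T_def by (rule card_PiE) simp
  finally show ?thesis by simp
qed



theorem lemma4p5:
  fixes V :: "'a set" and E :: "'a \<Rightarrow> 'a \<Rightarrow> bool"
    and h n :: nat and \<epsilon> \<rho> p :: real and Vs :: "nat \<Rightarrow> 'a set" and X :: "'a set"
  assumes G: "graph V E"
    and h: "h \<ge> 1" and n: "n \<ge> 1"
    and eps: "0 < \<epsilon>" "\<epsilon> \<le> 1/9"
    and rho: "0 < \<rho>" "\<rho> \<le> 1/2"
    and rich: "rich_inflation V E h Vs \<rho> \<epsilon> n"
    and XV: "X \<subseteq> V"
    and disj: "X \<inter> (\<Union>i<h. Vs i) = {}"
    and Xn: "card X \<ge> n"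
    and deg: "\<forall>y \<in> (\<Union>i<h. Vs i). real (deg_in E X y) \<ge> p * real (card X)"
    and p: "p \<ge> (1 - \<epsilon>) * \<rho>"
  shows "rich_inflation V E (h + 1) (Vs(h := X)) \<rho> (2 * \<epsilon>) n
     \<or> (\<exists>X' Y'. X' \<subseteq> X \<and> Y' \<subseteq> (\<Union>i<h. Vs i)
          \<and> real (card X') \<ge> \<epsilon> * \<rho> ^ (h^2) * real (card X)
          \<and> real (card Y') \<ge> \<epsilon> * \<rho> ^ (h^2) * real n
          \<and> (\<forall>y \<in> Y'. real (deg_in E X' y) \<ge> (1 + \<epsilon> * \<rho> ^ (2*h)) * p * real (card X')))"
    (is "?A \<or> ?B")
proof (cases ?B)
  case True thus ?thesis by blast
next
  case nb: False
  define Y where "Y = (\<Union>i<h. Vs i)"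
  define \<theta> where "\<theta> = \<epsilon> * \<rho> ^ (h^2)"
  define q where "q = p*(1-2*\<epsilon>)/(1-\<epsilon>)"
  define L where "L = ((1-2*\<epsilon>)*\<rho>)^(h-1) * real (card X)"
  define P where "P = (\<lambda>j (K::nat\<Rightarrow>'a). {x\<in>X. \<forall>i<j. E (K i) x})"
  define Ex where "Ex = (\<lambda>X'. {y\<in>Y. real (deg_in E X' y) < q * real (card X')})"
  define S where "S = canonical_copies E h Vs"
  define good where "good = {K\<in>S. \<forall>j<h. K j \<notin> Ex (P j K)}"
  define bad where "bad = (\<lambda>j. {K\<in>S. K j \<in> Ex (P j K) \<and> (\<forall>i<j. K i \<notin> Ex (P i K))})"
  define PP where "PP = (\<Prod>i<h. real (card (Vs i)))"
  have finV: "finite V" and Esym: "\<And>u v. E u v \<Longrightarrow> E v u" using G by (auto simp: graph_def)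
  have finX: "finite X" using finV XV finite_subset by blast
  have VsV: "\<And>i. i<h \<Longrightarrow> Vs i \<subseteq> V"
    and Vsdisj: "\<And>i j. i<h \<Longrightarrow> j<h \<Longrightarrow> i \<noteq> j \<Longrightarrow> Vs i \<inter> Vs j = {}"
    and edges0: "real (edges_in E (Vs 0)) \<ge> \<rho> * real (card (Vs 0) choose 2)"
    and copies: "real (card S) \<ge> ((1 - \<epsilon>) * \<rho>) ^ (h choose 2) * PP"
    and cardn: "\<And>i. i<h \<Longrightarrow> card (Vs i) \<ge> n"
    using rich unfolding rich_inflation_def S_def PP_def by auto
  have finVs: "\<And>i. i<h \<Longrightarrow> finite (Vs i)" using VsV finV finite_subset by blast
  have finY: "finite Y" unfolding Y_def using finVs by blast
  have cX: "real (card X) \<ge> 1" using Xn n by simp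
  have "(1-\<epsilon>)*\<rho> > 0" using eps rho by simp
  hence ppos: "p > 0" using p by linarith
  have q1: "q \<ge> (1-2*\<epsilon>)*\<rho>"
  proof -
    have "(1-\<epsilon>)*\<rho>*(1-2*\<epsilon>) \<le> p*(1-2*\<epsilon>)" using p eps by (intro mult_right_mono) auto
    thus ?thesis unfolding q_def using eps by (simp add: field_simps)
  qed
  have q2: "p - q \<ge> \<epsilon>*\<rho>" and q3: "p - q \<ge> \<epsilon> * p"
  proof -
    have pq: "p - q = p*\<epsilon>/(1-\<epsilon>)" unfolding q_def using eps by (simp add: field_simps)
    have "\<epsilon>*((1-\<epsilon>)*\<rho>) \<le> \<epsilon>*p" using p eps by (intro mult_left_mono) auto
    thus "p - q \<ge> \<epsilon>*\<rho>" unfolding pq using eps by (simp add: field_simps)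
    have "p*\<epsilon>*(1-\<epsilon>) \<le> p*\<epsilon>" using ppos eps by (simp add: mult_left_le)
    thus "p - q \<ge> \<epsilon> * p" unfolding pq using eps by (simp add: field_simps)
  qed
  have "(1-2*\<epsilon>)*\<rho> \<ge> 0" using eps rho by simp
  hence q0: "q \<ge> 0" using q1 by linarith
  have "\<epsilon> * p > 0" using eps ppos by simp
  hence qp: "q \<le> p" using q3 by linarith
  have b01: "(1-2*\<epsilon>)*\<rho> \<le> 1" "0 \<le> (1-2*\<epsilon>)*\<rho>" using eps rho by (auto intro: mult_le_one)
  have L0: "0 \<le> L" unfolding L_def using b01 by simp
  have rr: "(\<rho>*\<rho>)^(h-1) \<le> ((1-2*\<epsilon>)*\<rho>)^(h-1)"
    using eps rho by (intro power_mono mult_right_mono) auto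
  have R1: "\<rho>^(h^2) \<le> \<rho> * ((1-2*\<epsilon>)*\<rho>)^(h-1)"
  proof -
    obtain k where k: "h = k + 1" using h by (metis add.commute le_add_diff_inverse)
    have hh: "1 + 2*(h-1) \<le> h^2" unfolding k by (simp add: power2_eq_square)
    have "\<rho>^(h^2) \<le> \<rho>^(1 + 2*(h-1))"
      using rho hh by (intro power_decreasing) auto
    also have "\<dots> = \<rho> * (\<rho>*\<rho>)^(h-1)" by (simp add: power_mult power2_eq_square)
    also have "\<dots> \<le> \<rho> * ((1-2*\<epsilon>)*\<rho>)^(h-1)" using rr rho by simp
    finally show ?thesis .
  qed
  have R2: "\<rho>^(2*h) \<le> ((1-2*\<epsilon>)*\<rho>)^(h-1)"
  proof -
    have "\<rho>^(2*h) \<le> \<rho>^(2*(h-1))"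
      using rho h by (intro power_decreasing) auto
    also have "\<dots> = (\<rho>*\<rho>)^(h-1)" by (simp add: power_mult power2_eq_square)
    finally show ?thesis using rr by simp
  qed
  have deg_fin: "finite {x\<in>A. E y x}" if "A \<subseteq> X" for A y using finX that
    by (metis (no_types, lifting) finite_subset mem_Collect_eq subsetI)
  have exA: "real (card (Ex X')) < \<theta> * real n" if X'X: "X' \<subseteq> X" and LX': "L \<le> real (card X')" for X'
  proof -
    define Z where "Z = X - X'"
    have ZX: "Z \<subseteq> X" unfolding Z_def by blast
    have degsplit: "deg_in E X y = deg_in E X' y + deg_in E Z y" for y
    proof -
      have "{x\<in>X. E y x} = {x\<in>X'. E y x} \<union> {x\<in>Z. E y x}" using X'X unfolding Z_def by blast
      moreover have "{x\<in>X'. E y x} \<inter> {x\<in>Z. E y x} = {}" unfolding Z_def by blast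
      ultimately show ?thesis unfolding deg_in_def
        using deg_fin[OF X'X] deg_fin[OF ZX] by (simp add: card_Un_disjoint)
    qed
    have degZ: "deg_in E Z y \<le> card Z" for y
      unfolding deg_in_def using finX ZX by (intro card_mono) (auto intro: finite_subset)
    have cardZ: "real (card X) = real (card X') + real (card Z)"
      unfolding Z_def using X'X finX by (simp add: card_Diff_subset finite_subset card_mono of_nat_diff)
    have g1: "\<theta> * real (card X) \<le> (p - q) * real (card X')"
    proof -
      have "\<theta> * real (card X) \<le> \<epsilon> * (\<rho> * ((1-2*\<epsilon>)*\<rho>)^(h-1)) * real (card X)"
        unfolding \<theta>_def using R1 eps by (intro mult_right_mono mult_left_mono) auto
      also have "\<dots> = (\<epsilon>*\<rho>) * L" unfolding L_def by simp
      also have "\<dots> \<le> (p - q) * real (card X')" using q2 LX' eps rho L0 qp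
        by (intro mult_mono) auto
      finally show ?thesis .
    qed
    have g2: "\<epsilon> * \<rho> ^ (2*h) * p * real (card Z) \<le> (p - q) * real (card X')"
    proof -
      have "\<epsilon> * \<rho> ^ (2*h) * p * real (card Z) \<le> \<epsilon> * ((1-2*\<epsilon>)*\<rho>)^(h-1) * p * real (card X)"
        using R2 eps rho ppos cardZ by (intro mult_mono) auto
      also have "\<dots> = (\<epsilon> * p) * L" unfolding L_def by simp
      also have "\<dots> \<le> (p - q) * real (card X')" using q3 LX' eps ppos L0 qp
        by (intro mult_mono) auto
      finally show ?thesis .
    qed
    show ?thesis
    proof (cases "real (card Z) < \<theta> * real (card X)")
      case True
      have "Ex X' = {}"
      proof (rule ccontr)
        assume "Ex X' \<noteq> {}"
        then obtain y where y: "y \<in> Y" "real (deg_in E X' y) < q * real (card X')"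
          unfolding Ex_def by blast
        have "p * real (card X) \<le> real (deg_in E X y)" using deg y unfolding Y_def by blast
        also have "\<dots> \<le> real (deg_in E X' y) + real (card Z)" using degsplit degZ
          by (metis add_left_mono of_nat_add of_nat_le_iff)
        finally have "p * real (card X) < q * real (card X') + \<theta> * real (card X)" using y True by linarith
        moreover have "p * real (card X') \<le> p * real (card X)" using cardZ ppos by simp
        ultimately show False using g1 by (simp add: algebra_simps)
      qed
      thus ?thesis using eps rho n unfolding \<theta>_def by simp
    next
      case False
      define Bz where "Bz = {y\<in>Y. (1 + \<epsilon> * \<rho> ^ (2*h)) * p * real (card Z) \<le> real (deg_in E Z y)}"
      have cB: "real (card Bz) < \<theta> * real n"
      proof (rule ccontr)
        assume "\<not> ?thesis"
        hence "Z \<subseteq> X \<and> Bz \<subseteq> (\<Union>i<h. Vs i)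
          \<and> real (card Z) \<ge> \<epsilon> * \<rho> ^ (h^2) * real (card X)
          \<and> real (card Bz) \<ge> \<epsilon> * \<rho> ^ (h^2) * real n
          \<and> (\<forall>y \<in> Bz. real (deg_in E Z y) \<ge> (1 + \<epsilon> * \<rho> ^ (2*h)) * p * real (card Z))"
          using ZX False unfolding Bz_def Y_def \<theta>_def by auto
        thus False using nb by blast
      qed
      have "Ex X' \<subseteq> Bz"
      proof
        fix y assume y: "y \<in> Ex X'"
        hence yY: "y \<in> Y" and y2: "real (deg_in E X' y) < q * real (card X')" unfolding Ex_def by auto
        show "y \<in> Bz"
        proof (rule ccontr)
          assume "y \<notin> Bz"
          hence y3: "real (deg_in E Z y) < (1 + \<epsilon> * \<rho> ^ (2*h)) * p * real (card Z)"
            using yY unfolding Bz_def by auto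
          have "p * real (card X) \<le> real (deg_in E X y)" using deg yY unfolding Y_def by blast
          also have "\<dots> = real (deg_in E X' y) + real (deg_in E Z y)" using degsplit by simp
          finally have "p * real (card X) < q * real (card X') + (1 + \<epsilon> * \<rho> ^ (2*h)) * p * real (card Z)"
            using y2 y3 by linarith
          thus False using g2 cardZ by (simp add: algebra_simps)
        qed
      qed
      hence "card (Ex X') \<le> card Bz" using finY unfolding Bz_def by (intro card_mono) auto
      thus ?thesis using cB by linarith
    qed
  qed

  have SPi: "S \<subseteq> Pi\<^sub>E {..<h} Vs" unfolding S_def canonical_copies_def by blast
  have Sedge: "\<And>K i j. K \<in> S \<Longrightarrow> i < h \<Longrightarrow> j < h \<Longrightarrow> i \<noteq> j \<Longrightarrow> E (K i) (K j)"
    unfolding S_def canonical_copies_def by blast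
  have finS: "finite S" using SPi finVs by (meson finite_PiE finite_lessThan finite_subset lessThan_iff)
  have KY: "K j \<in> Y" if "K \<in> S" "j < h" for K j
    using that SPi unfolding Y_def by (auto simp: PiE_iff)
  have PX: "P j K \<subseteq> X" for j K unfolding P_def by blast
  have P0: "P 0 K = X" for K unfolding P_def by simp
  have PSuc: "card (P (Suc j) K) = deg_in E (P j K) (K j)" for j K
  proof -
    have "P (Suc j) K = {x \<in> P j K. E (K j) x}" unfolding P_def by (auto simp: less_Suc_eq)
    thus ?thesis unfolding deg_in_def by simp
  qed
  have ExX: "Ex X = {}"
  proof -
    have "q * real (card X) \<le> real (deg_in E X y)" if "y \<in> Y" for y
    proof -
      have "q * real (card X) \<le> p * real (card X)" using qp by (simp add: mult_right_mono)
      also have "\<dots> \<le> real (deg_in E X y)" using deg that unfolding Y_def by blast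
      finally show ?thesis .
    qed
    thus ?thesis unfolding Ex_def by force
  qed
  have claim1: "q^j * real (card X) \<le> real (card (P j K))"
    if KS: "K \<in> S" and "j \<le> h" "\<forall>i<j. K i \<notin> Ex (P i K)" for K j
    using that(2,3)
  proof (induction j)
    case 0 show ?case by (simp add: P0)
  next
    case (Suc j)
    have jh: "j < h" using Suc.prems by simp
    have nEx: "K j \<notin> Ex (P j K)" using Suc.prems by simp
    have dd: "q * real (card (P j K)) \<le> real (deg_in E (P j K) (K j))"
      using nEx KY[OF KS jh] unfolding Ex_def by auto
    have IH: "q^j * real (card X) \<le> real (card (P j K))" using Suc by simp
    have "q^(Suc j) * real (card X) = q * (q^j * real (card X))" by simp
    also have "\<dots> \<le> q * real (card (P j K))" using IH q0 by (rule mult_left_mono)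
    also have "\<dots> \<le> real (card (P (Suc j) K))" using dd PSuc by simp
    finally show ?case .
  qed
  have qL: "L \<le> q^j * real (card X)" if "j < h" for j
  proof -
    have "((1-2*\<epsilon>)*\<rho>)^(h-1) \<le> ((1-2*\<epsilon>)*\<rho>)^j"
      using that b01 by (intro power_decreasing) auto
    also have "\<dots> \<le> q^j" using b01 q1 by (intro power_mono) auto
    finally show ?thesis unfolding L_def by (simp add: mult_right_mono)
  qed
  have th0: "\<theta> \<ge> 0" unfolding \<theta>_def using eps rho by simp
  have PP0: "PP \<ge> 0" unfolding PP_def by (simp add: prod_nonneg)
  have badb: "real (card (bad j)) \<le> \<theta> * PP" if jh: "j < h" for j
  proof -
    define F where "F = (\<lambda>t. (if L \<le> real (card (P j t)) then Ex (P j t) else {}) \<inter> Vs j)"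
    have "real (card (bad j)) \<le> (\<theta> * real n) * (\<Prod>i\<in>{..<h}-{j}. real (card (Vs i)))"
    proof (rule fiber_bound[OF finVs jh])
      show "bad j \<subseteq> Pi\<^sub>E {..<h} Vs" using SPi unfolding bad_def by blast
      show "F t \<subseteq> Vs j" for t unfolding F_def by blast
      show "real (card (F t)) \<le> \<theta> * real n" for t
      proof (cases "L \<le> real (card (P j t))")
        case True
        have "card (F t) \<le> card (Ex (P j t))" unfolding F_def using True finY
          by (intro card_mono) (auto simp: Ex_def)
        thus ?thesis using exA[OF PX True] by linarith
      next
        case False thus ?thesis unfolding F_def using th0 by simp
      qed
      fix K assume K: "K \<in> bad j"
      have KS: "K \<in> S" and K1: "K j \<in> Ex (P j K)" and K2: "\<forall>i<j. K i \<notin> Ex (P i K)"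
        using K unfolding bad_def by auto
      have Peq: "P j (K(j:=undefined)) = P j K" unfolding P_def by auto
      have "L \<le> real (card (P j K))" using qL[OF jh] claim1[OF KS _ K2] jh by force
      moreover have "K j \<in> Vs j" using KS SPi jh by (auto simp: PiE_iff)
      ultimately show "K j \<in> F (K(j:=undefined))" unfolding F_def Peq using K1 by simp
    qed simp
    also have "\<dots> \<le> \<theta> * PP"
    proof -
      have "PP = real (card (Vs j)) * (\<Prod>i\<in>{..<h}-{j}. real (card (Vs i)))"
        unfolding PP_def using jh by (simp add: prod.remove)
      moreover have "real n \<le> real (card (Vs j))" using cardn[OF jh] by simp
      moreover have "(\<Prod>i\<in>{..<h}-{j}. real (card (Vs i))) \<ge> 0" by (simp add: prod_nonneg)
      ultimately show ?thesis using th0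
        by (metis mult.assoc mult_left_mono mult_right_mono of_nat_le_iff)
    qed
    finally show ?thesis .
  qed
  have cover: "S \<subseteq> good \<union> (\<Union>j\<in>{1..<h}. bad j)"
  proof
    fix K assume KS: "K \<in> S"
    show "K \<in> good \<union> (\<Union>j\<in>{1..<h}. bad j)"
    proof (cases "K \<in> good")
      case False
      hence "\<exists>j. j < h \<and> K j \<in> Ex (P j K)" using KS unfolding good_def by blast
      then obtain j where j: "j < h \<and> K j \<in> Ex (P j K)" and jl: "\<forall>m<j. \<not> (m < h \<and> K m \<in> Ex (P m K))"
        using exists_least_iff[of "\<lambda>j. j < h \<and> K j \<in> Ex (P j K)"] by blast
      have "j \<noteq> 0"
      proof
        assume "j = 0" thus False using j ExX P0[of K] by simp
      qed
      moreover have "K \<in> bad j" unfolding bad_def using KS j jl by auto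
      ultimately show ?thesis using j by auto
    qed simp
  qed
  have cardS: "card S \<le> card good + (\<Sum>j\<in>{1..<h}. card (bad j))"
  proof -
    have fin1: "finite (good \<union> (\<Union>j\<in>{1..<h}. bad j))"
      using finS unfolding good_def bad_def by auto
    have "card S \<le> card (good \<union> (\<Union>j\<in>{1..<h}. bad j))" using card_mono[OF fin1 cover] .
    also have "\<dots> \<le> card good + card (\<Union>j\<in>{1..<h}. bad j)" by (rule card_Un_le)
    also have "\<dots> \<le> card good + (\<Sum>j\<in>{1..<h}. card (bad j))" using card_UN_le[of "{1..<h}" bad] by simp
    finally show ?thesis .
  qed
  have goodb: "real (card good) \<ge> ((1 - \<epsilon>) * \<rho>) ^ (h choose 2) * PP - real (h-1) * \<theta> * PP"
  proof -
    have "(\<Sum>j\<in>{1..<h}. real (card (bad j))) \<le> (\<Sum>j\<in>{1..<h}. \<theta> * PP)"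
      using badb by (intro sum_mono) auto
    also have "\<dots> = real (h-1) * \<theta> * PP" by simp
    finally have "(\<Sum>j\<in>{1..<h}. real (card (bad j))) \<le> real (h-1) * \<theta> * PP" .
    moreover have "real (card S) \<le> real (card good) + (\<Sum>j\<in>{1..<h}. real (card (bad j)))"
      using cardS by (metis of_nat_add of_nat_le_iff of_nat_sum)
    ultimately show ?thesis using copies by linarith
  qed
  define C' where "C' = canonical_copies E (h+1) (Vs(h:=X))"
  define A where "A = (\<lambda>K. (\<lambda>x. K(h:=x)) ` P h K)"
  have claim3: "(\<Sum>K\<in>good. real (card (P h K))) \<le> real (card C')"
  proof -
    have sub3: "(\<Union>K\<in>good. A K) \<subseteq> C'"
    proof (rule UN_least, rule subsetI)
      fix K y assume Kg: "K \<in> good" and y: "y \<in> A K"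
      then obtain x where x: "x \<in> P h K" and yx: "y = K(h:=x)" unfolding A_def by blast
      have KS: "K \<in> S" using Kg unfolding good_def by blast
      have KP: "K \<in> Pi\<^sub>E {..<h} Vs" using KS SPi by blast
      have xX: "x \<in> X" and xE: "\<forall>i<h. E (K i) x" using x unfolding P_def by auto
      have "y \<in> Pi\<^sub>E {..<h+1} (Vs(h:=X))"
        unfolding yx using KP xX by (auto simp: PiE_iff extensional_def less_Suc_eq)
      moreover have "E (y i) (y j)" if "i < h+1" "j < h+1" "i \<noteq> j" for i j
      proof -
        have cs: "(i = h \<and> j < h) \<or> (j = h \<and> i < h) \<or> (i < h \<and> j < h)"
          using that by linarith
        show ?thesis
        proof (cases "i = h")
          case True thus ?thesis using cs that unfolding yx using xE Esym by auto
        next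
          case F1: False
          show ?thesis
          proof (cases "j = h")
            case True thus ?thesis using cs F1 unfolding yx using xE by auto
          next
            case False thus ?thesis using cs F1 unfolding yx using Sedge[OF KS] that by auto
          qed
        qed
      qed
      ultimately show "y \<in> C'" unfolding C'_def canonical_copies_def by blast
    qed
    have finC': "finite C'"
    proof -
      have "finite (Pi\<^sub>E {..<h+1} (Vs(h:=X)))" using finVs finX by (intro finite_PiE) auto
      thus ?thesis unfolding C'_def canonical_copies_def by (rule rev_finite_subset) blast
    qed
    have finG: "finite good" using finS unfolding good_def by simp
    have cardA: "card (A K) = card (P h K)" for K
      unfolding A_def by (rule card_image) (auto simp: inj_on_def dest: fun_cong[where x=h])
    have disjA: "\<forall>K1\<in>good. \<forall>K2\<in>good. K1 \<noteq> K2 \<longrightarrow> A K1 \<inter> A K2 = {}"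
    proof (intro ballI impI)
      fix K1 K2 assume K1: "K1 \<in> good" and K2: "K2 \<in> good" and ne: "K1 \<noteq> K2"
      have h1: "K1 h = undefined" "K2 h = undefined"
        using K1 K2 SPi unfolding good_def by (auto intro: PiE_arb)
      show "A K1 \<inter> A K2 = {}"
      proof (rule ccontr)
        assume "A K1 \<inter> A K2 \<noteq> {}"
        then obtain x1 x2 where eq: "K1(h:=x1) = K2(h:=x2)" unfolding A_def by auto
        have "K1 = K2"
        proof
          fix i show "K1 i = K2 i"
            using h1 fun_cong[OF eq, of i] by (cases "i = h") auto
        qed
        thus False using ne by simp
      qed
    qed
    have finA: "\<forall>K\<in>good. finite (A K)" unfolding A_def using finX PX by (meson finite_imageI finite_subset)
    have "(\<Sum>K\<in>good. card (P h K)) = card (\<Union>K\<in>good. A K)"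
      using card_UN_disjoint[OF finG finA disjA] cardA by simp
    also have "\<dots> \<le> card C'" using card_mono[OF finC' sub3] .
    finally show ?thesis by (metis of_nat_le_iff of_nat_sum)
  qed
  have sumgood: "real (card good) * (q^h * real (card X)) \<le> (\<Sum>K\<in>good. real (card (P h K)))"
  proof -
    have "(\<Sum>K\<in>good. q^h * real (card X)) \<le> (\<Sum>K\<in>good. real (card (P h K)))"
    proof (rule sum_mono)
      fix K assume "K \<in> good"
      thus "q^h * real (card X) \<le> real (card (P h K))"
        unfolding good_def by (intro claim1) auto
    qed
    thus ?thesis by simp
  qed
  define b where "b = (1-2*\<epsilon>)*\<rho>"
  have ineqC: "b^(h choose 2) \<le> ((1 - \<epsilon>) * \<rho>) ^ (h choose 2) - real (h-1) * \<theta>"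
  proof (cases "h = 1")
    case True
    have C0: "h choose 2 = 0" using True by (intro binomial_eq_0) simp
    have R0: "real (h-1) = 0" using True by simp
    show ?thesis unfolding C0 R0 by simp
  next
    case False thus ?thesis using ineq1[OF eps rho, of h] h unfolding b_def \<theta>_def by simp
  qed
  have chooseS: "(h + 1 choose 2) = (h choose 2) + h"
    using binomial_Suc_Suc[of h 1] by (simp add: numeral_2_eq_2)
  have prodeq: "(\<Prod>i<h + 1. real (card ((Vs(h := X)) i))) = PP * real (card X)"
    unfolding PP_def by simp
  have count: "b ^ (h + 1 choose 2) * (\<Prod>i<h + 1. real (card ((Vs(h := X)) i))) \<le> real (card C')"
  proof -
    have "b ^ (h + 1 choose 2) * (\<Prod>i<h + 1. real (card ((Vs(h := X)) i)))
        = (b^(h choose 2) * PP) * (b^h * real (card X))"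
      unfolding chooseS prodeq by (simp add: power_add algebra_simps)
    also have "\<dots> \<le> ((((1 - \<epsilon>) * \<rho>) ^ (h choose 2) - real (h-1) * \<theta>) * PP) * (q^h * real (card X))"
    proof (rule mult_mono)
      show "b ^ (h choose 2) * PP \<le> (((1 - \<epsilon>) * \<rho>) ^ (h choose 2) - real (h-1) * \<theta>) * PP"
        using ineqC PP0 by (rule mult_right_mono)
      show "b ^ h * real (card X) \<le> q ^ h * real (card X)"
        using b01 q1 unfolding b_def by (intro mult_right_mono power_mono) auto
      show "0 \<le> (((1 - \<epsilon>) * \<rho>) ^ (h choose 2) - real (h-1) * \<theta>) * PP"
        using ineqC PP0 b01 unfolding b_def by (metis mult_nonneg_nonneg order_trans zero_le_power)
      show "0 \<le> b ^ h * real (card X)" using b01 unfolding b_def by simp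
    qed
    also have "\<dots> \<le> real (card good) * (q^h * real (card X))"
      using goodb q0 by (intro mult_right_mono) (auto simp: algebra_simps)
    also have "\<dots> \<le> real (card C')" using sumgood claim3 by linarith
    finally show ?thesis .
  qed
  have ?A unfolding rich_inflation_def
  proof (intro conjI allI impI)
    fix i assume "i < h + 1" thus "(Vs(h := X)) i \<subseteq> V" using VsV XV by (auto simp: less_Suc_eq)
  next
    fix i j assume "i < h + 1" "j < h + 1" "i \<noteq> j"
    thus "(Vs(h := X)) i \<inter> (Vs(h := X)) j = {}"
      using Vsdisj disj by (auto simp: less_Suc_eq)
  next
    show "\<rho> * real (card ((Vs(h := X)) 0) choose 2) \<le> real (edges_in E ((Vs(h := X)) 0))"
      using edges0 h by simp
  next
    show "((1 - 2 * \<epsilon>) * \<rho>) ^ (h + 1 choose 2) * (\<Prod>i<h + 1. real (card ((Vs(h := X)) i)))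
      \<le> real (card (canonical_copies E (h + 1) (Vs(h := X))))"
      using count unfolding b_def C'_def .
  next
    fix i assume "i < h + 1" thus "n \<le> card ((Vs(h := X)) i)" using cardn Xn by (auto simp: less_Suc_eq)
  qed
  thus ?thesis by blast
qed

end
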